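(* Let $n,k\ge1$, $\mathfrak g=\mathfrak{gl}_n(\mathbb{C})$, $M=V^{\otimes k}\otimes(V^* )^{\otimes k}$ and $e=(\mathrm{id}-p_1)\cdots(\mathrm{id}-p_k)$. Let $0\le r\le k$, let $\underline s=(s_1<\cdots<s_{k-r})$ be a subset of $\{1,\dots,k\}$ of size $k-r$, let $\underline t=(t_1,\dots,t_{k-r})$ be a sequence of $k-r$ distinct elements of $\{1,\dots,k\}$, let $\lambda,\mu$ be partitions of $r$, let $T$ be a standard tableau of shape $\lambda$ with entries in $\{1,\dots,k\}\setminus\underline s$ and $T^*$ a standard tableau of shape $\mu$ with entries in $\{1,\dots,k\}\setminus\underline t$, and set $y=y_Ty_{T^*}c_{\underline s,\underline t}$. If $s_i=t_i$ for some $i\in\{1,\dots,k-r\}$ (i.e. the product $c_{\underline s,\underline t}$ contains a factor $c_{j,j}$), then $ey=0=ye$.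
   Context: $V=\mathbb{C}^n$ (column vectors, standard basis $v_1,\dots,v_n$), $V^*$ row vectors with dual basis $v_1^*,\dots,v_n^*$. For $1\le i,j\le k$ the contraction $c_{i,j}:M\to M$ is $c_{i,j}(u_1\otimes\cdots\otimes u_k\otimes w_1^*\otimes\cdots\otimes w_k^* )=(w_j^*u_i)\sum_{\ell=1}^n(\text{same tensor with }u_i\text{ replaced by }v_\ell\text{ and }w_j^*\text{ replaced by }v_\ell^* )$. Set $p_i=\frac1n c_{i,i}$ and $c_{\underline s,\underline t}=c_{s_1,t_1}c_{s_2,t_2}\cdots c_{s_{k-r},t_{k-r}}$. A standard tableau of shape $\lambda$ with entries in a set $S$ of size $|\lambda|$ is a filling of the Young diagram of $\lambda$ by the elements of $S$, each used once, increasing along rows and down columns. For such $T$, the row group $R_T$ (resp. column group $C_T$) is the set of permutations of $\{1,\dots,k\}$ fixing every element not in $T$ and sending each entry of $T$ to an entry in the same row (resp. column) of $T$, and $y_T=\big(\sum_{\rho\in R_T}\rho\big)\big(\sum_{\gamma\in C_T}\mathrm{sgn}(\gamma)\gamma\big)\in\mathbb{C}S_k$. Here $y_T$ acts on $M$ by place permutations of the $k$ factors of $V^{\otimes k}$ and $y_{T^*}$ by place permutations of the $k$ factors of $(V^* )^{\otimes k}$. *)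

theory Defs
  imports Complex_Main "HOL-Library.FuncSet" "HOL-Combinatorics.Permutations"
begin

text \<open>Basis of M = V^{\<otimes>k} \<otimes> (V^*)^{\<otimes>k}: a pair (a,b) of index functions
  a, b : {1..k} \<rightarrow> {1..n}; (a,b) stands for
  v_{a 1} \<otimes> ... \<otimes> v_{a k} \<otimes> v_{b 1}^* \<otimes> ... \<otimes> v_{b k}^*.
  Linear operators on M are represented by their matrices w.r.t. this basis:
  A out inp is the coefficient of basis vector out in A(inp).\<close>

type_synonym bidx = "(nat \<Rightarrow> nat) \<times> (nat \<Rightarrow> nat)"
type_synonym op = "bidx \<Rightarrow> bidx \<Rightarrow> complex"

definition basisM :: "nat \<Rightarrow> nat \<Rightarrow> bidx set" where
  "basisM n k = ({1..k} \<rightarrow>\<^sub>E {1..n}) \<times> ({1..k} \<rightarrow>\<^sub>E {1..n})"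

definition op_id :: op where
  "op_id x y = (if x = y then 1 else 0)"

definition op_mult :: "nat \<Rightarrow> nat \<Rightarrow> op \<Rightarrow> op \<Rightarrow> op" where
  "op_mult n k A B = (\<lambda>x z. \<Sum>y\<in>basisM n k. A x y * B y z)"

definition op_prod :: "nat \<Rightarrow> nat \<Rightarrow> op list \<Rightarrow> op" where
  "op_prod n k As = foldr (op_mult n k) As op_id"

definition contr :: "nat \<Rightarrow> nat \<Rightarrow> nat \<Rightarrow> op" where
  "contr n i j = (\<lambda>(a',b') (a,b).
     if a i = b j \<and> (\<exists>l\<in>{1..n}. a' = a(i := l) \<and> b' = b(j := l)) then 1 else 0)"

definition proj :: "nat \<Rightarrow> nat \<Rightarrow> op" where
  "proj n i = (\<lambda>x y. contr n i i x y / of_nat n)"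

definition e_op :: "nat \<Rightarrow> nat \<Rightarrow> op" where
  "e_op n k = op_prod n k (map (\<lambda>i. (\<lambda>x y. op_id x y - proj n i x y)) [1..<k+1])"

definition contr_seq :: "nat \<Rightarrow> nat \<Rightarrow> nat list \<Rightarrow> nat list \<Rightarrow> op" where
  "contr_seq n k s t = op_prod n k (map (\<lambda>(i,j). contr n i j) (zip s t))"

text \<open>place permutations (left action: factor i of the result is factor
  inv \<sigma> i of the input), on the V-factors resp. on the V^*-factors\<close>
definition permV :: "(nat \<Rightarrow> nat) \<Rightarrow> op" where
  "permV \<sigma> = (\<lambda>(a',b') (a,b). if a' = a \<circ> inv \<sigma> \<and> b' = b then 1 else 0)"

definition permVd :: "(nat \<Rightarrow> nat) \<Rightarrow> op" where
  "permVd \<sigma> = (\<lambda>(a',b') (a,b). if a' = a \<and> b' = b \<circ> inv \<sigma> then 1 else 0)"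

text \<open>partitions and tableaux (cells are 0-based (row, column) pairs)\<close>
definition is_partition :: "nat list \<Rightarrow> nat \<Rightarrow> bool" where
  "is_partition lam r \<longleftrightarrow> sorted_wrt (\<ge>) lam \<and> (\<forall>x\<in>set lam. x > 0) \<and> sum_list lam = r"

definition cells :: "nat list \<Rightarrow> (nat \<times> nat) set" where
  "cells lam = {(i, j). i < length lam \<and> j < lam ! i}"

definition standard_tableau :: "nat list \<Rightarrow> nat set \<Rightarrow> (nat \<times> nat \<Rightarrow> nat) \<Rightarrow> bool" where
  "standard_tableau lam S T \<longleftrightarrow>
     bij_betw T (cells lam) S \<and>
     (\<forall>i j j'. (i, j) \<in> cells lam \<longrightarrow> (i, j') \<in> cells lam \<longrightarrow> j < j' \<longrightarrow> T (i, j) < T (i, j')) \<and>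
     (\<forall>i i' j. (i, j) \<in> cells lam \<longrightarrow> (i', j) \<in> cells lam \<longrightarrow> i < i' \<longrightarrow> T (i, j) < T (i', j))"

definition row_group :: "nat \<Rightarrow> nat list \<Rightarrow> (nat \<times> nat \<Rightarrow> nat) \<Rightarrow> (nat \<Rightarrow> nat) set" where
  "row_group k lam T = {\<sigma>. \<sigma> permutes {1..k} \<and> (\<forall>x\<in>{1..k}. x \<notin> T ` cells lam \<longrightarrow> \<sigma> x = x) \<and>
     (\<forall>c\<in>cells lam. \<exists>c'\<in>cells lam. fst c' = fst c \<and> T c' = \<sigma> (T c))}"

definition col_group :: "nat \<Rightarrow> nat list \<Rightarrow> (nat \<times> nat \<Rightarrow> nat) \<Rightarrow> (nat \<Rightarrow> nat) set" where
  "col_group k lam T = {\<sigma>. \<sigma> permutes {1..k} \<and> (\<forall>x\<in>{1..k}. x \<notin> T ` cells lam \<longrightarrow> \<sigma> x = x) \<and>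
     (\<forall>c\<in>cells lam. \<exists>c'\<in>cells lam. snd c' = snd c \<and> T c' = \<sigma> (T c))}"

definition young_op :: "nat \<Rightarrow> nat \<Rightarrow> ((nat \<Rightarrow> nat) \<Rightarrow> op) \<Rightarrow> nat list \<Rightarrow> (nat \<times> nat \<Rightarrow> nat) \<Rightarrow> op" where
  "young_op n k P lam T = op_mult n k
     (\<lambda>x y. \<Sum>\<rho>\<in>row_group k lam T. P \<rho> x y)
     (\<lambda>x y. \<Sum>\<gamma>\<in>col_group k lam T. of_int (sign \<gamma>) * P \<gamma> x y)"

end

theory Submission
  imports Defs
begin

definition eqv :: "nat \<Rightarrow> nat \<Rightarrow> op \<Rightarrow> op \<Rightarrow> bool" where
  "eqv n k A B \<longleftrightarrow> (\<forall>x\<in>basisM n k. \<forall>z\<in>basisM n k. A x z = B x z)"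

definition zop :: op where "zop = (\<lambda>x y. 0)"

definition comm :: "nat \<Rightarrow> nat \<Rightarrow> op \<Rightarrow> op \<Rightarrow> bool" where
  "comm n k A C \<longleftrightarrow> eqv n k (op_mult n k A C) (op_mult n k C A)"

lemma finite_basisM: "finite (basisM n k)"
  unfolding basisM_def by (simp add: finite_PiE)

lemma eqv_refl: "eqv n k A A" by (simp add: eqv_def)
lemma eqv_sym: "eqv n k A B \<Longrightarrow> eqv n k B A" by (simp add: eqv_def)
lemma eqv_trans: "eqv n k A B \<Longrightarrow> eqv n k B C \<Longrightarrow> eqv n k A C" by (simp add: eqv_def)

lemma mult_cong: "eqv n k A A' \<Longrightarrow> eqv n k B B' \<Longrightarrow> eqv n k (op_mult n k A B) (op_mult n k A' B')"
  unfolding eqv_def op_mult_def by (auto intro!: sum.cong)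

lemma mult_assoc: "op_mult n k (op_mult n k A B) C = op_mult n k A (op_mult n k B C)"
  unfolding op_mult_def
  by (auto simp: sum_distrib_left sum_distrib_right mult.assoc intro!: ext sum.swap)

lemma id_left: "eqv n k (op_mult n k op_id A) A"
proof -
  have "\<And>x z. (\<Sum>y\<in>basisM n k. op_id x y * A y z) = (\<Sum>y\<in>basisM n k. if y = x then A x z else 0)"
    unfolding op_id_def by (intro sum.cong) auto
  then show ?thesis unfolding eqv_def op_mult_def by (simp add: finite_basisM)
qed

lemma id_right: "eqv n k (op_mult n k A op_id) A"
proof -
  have "\<And>x z. (\<Sum>y\<in>basisM n k. A x y * op_id y z) = (\<Sum>y\<in>basisM n k. if y = z then A x z else 0)"
    unfolding op_id_def by (intro sum.cong) auto
  then show ?thesis unfolding eqv_def op_mult_def by (simp add: finite_basisM)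
qed

lemma zero_left: "op_mult n k zop A = zop" unfolding op_mult_def zop_def by auto
lemma zero_right: "op_mult n k A zop = zop" unfolding op_mult_def zop_def by auto

lemma comm_id: "comm n k op_id C"
  unfolding comm_def using id_left id_right eqv_trans eqv_sym by metis

lemma comm_mult: assumes "comm n k A C" "comm n k B C" shows "comm n k (op_mult n k A B) C"
proof -
  have "eqv n k (op_mult n k (op_mult n k A B) C) (op_mult n k A (op_mult n k C B))"
    unfolding mult_assoc using assms(2) unfolding comm_def by (rule mult_cong[OF eqv_refl])
  also have "op_mult n k A (op_mult n k C B) = op_mult n k (op_mult n k A C) B"
    by (simp add: mult_assoc)
  finally have 1: "eqv n k (op_mult n k (op_mult n k A B) C) (op_mult n k (op_mult n k C A) B)"
    using assms(1) unfolding comm_def by (meson eqv_trans mult_cong eqv_refl)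
  show ?thesis unfolding comm_def using 1 by (simp add: mult_assoc)
qed

lemma comm_prod: "\<forall>G\<in>set L. comm n k G C \<Longrightarrow> comm n k (op_prod n k L) C"
  by (induction L) (auto simp: op_prod_def comm_id intro: comm_mult)

lemma prod_kill:
  assumes "\<forall>G\<in>set L. comm n k G C" "G0 \<in> set L"
    "eqv n k (op_mult n k G0 C) zop" "eqv n k (op_mult n k C G0) zop"
  shows "eqv n k (op_mult n k (op_prod n k L) C) zop \<and> eqv n k (op_mult n k C (op_prod n k L)) zop"
  using assms
proof (induction L)
  case Nil then show ?case by simp
next
  case (Cons x L)
  let ?P = "op_prod n k L"
  have px: "op_prod n k (x # L) = op_mult n k x ?P" by (simp add: op_prod_def)
  have cx: "comm n k x C" and cP: "comm n k ?P C" using Cons.prems by (auto intro: comm_prod)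
  show ?case
  proof (cases "G0 \<in> set L")
    case True
    with Cons have ih: "eqv n k (op_mult n k ?P C) zop" "eqv n k (op_mult n k C ?P) zop" by auto
    have 1: "eqv n k (op_mult n k (op_prod n k (x#L)) C) zop"
      unfolding px mult_assoc using mult_cong[OF eqv_refl ih(1), of x] by (simp add: zero_right)
    have "eqv n k (op_mult n k C (op_prod n k (x#L))) (op_mult n k (op_mult n k x C) ?P)"
      unfolding px mult_assoc[symmetric]
      by (rule mult_cong[OF eqv_sym[OF cx[unfolded comm_def]] eqv_refl])
    moreover have "eqv n k (op_mult n k (op_mult n k x C) ?P) zop"
      unfolding mult_assoc using mult_cong[OF eqv_refl ih(2), of x] by (simp add: zero_right)
    ultimately show ?thesis using 1 eqv_trans by blast
  next
    case False
    then have xg: "x = G0" using Cons.prems by auto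
    have "eqv n k (op_mult n k (op_prod n k (x#L)) C) (op_mult n k (op_mult n k x C) ?P)"
      unfolding px mult_assoc using cP unfolding comm_def by (rule mult_cong[OF eqv_refl])
    moreover have "eqv n k (op_mult n k (op_mult n k x C) ?P) zop"
      using mult_cong[OF Cons.prems(3)[folded xg] eqv_refl, of ?P] by (simp add: zero_left)
    moreover have "eqv n k (op_mult n k C (op_prod n k (x#L))) zop"
      unfolding px mult_assoc[symmetric]
      using mult_cong[OF Cons.prems(4)[folded xg] eqv_refl, of ?P] by (simp add: zero_left)
    ultimately show ?thesis using eqv_trans by blast
  qed
qed

lemma prod_extract:
  assumes "\<forall>G\<in>set L. comm n k G C" "C \<in> set L"
  shows "eqv n k (op_prod n k L) (op_mult n k C (op_prod n k (remove1 C L)))"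
  using assms
proof (induction L)
  case Nil then show ?case by simp
next
  case (Cons x L)
  show ?case
  proof (cases "x = C")
    case True then show ?thesis by (simp add: op_prod_def eqv_refl)
  next
    case False
    let ?R = "op_prod n k (remove1 C L)"
    have cx: "comm n k x C" using Cons.prems by auto
    have "eqv n k (op_prod n k (x#L)) (op_mult n k x (op_mult n k C ?R))"
      using Cons False by (auto simp: op_prod_def intro: mult_cong eqv_refl)
    also have "op_mult n k x (op_mult n k C ?R) = op_mult n k (op_mult n k x C) ?R"
      by (simp add: mult_assoc)
    finally have 1: "eqv n k (op_prod n k (x#L)) (op_mult n k (op_mult n k C x) ?R)"
      using cx unfolding comm_def by (meson eqv_trans mult_cong eqv_refl)
    show ?thesis using 1 False by (simp add: op_prod_def mult_assoc)
  qed
qed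

lemma contr_col:
  "contr n i j y (a, b) = (\<Sum>l\<in>{1..n}. if y = (a(i:=l), b(j:=l)) then (if a i = b j then 1 else 0) else 0)"
proof (cases "\<exists>l\<in>{1..n}. y = (a(i:=l), b(j:=l))")
  case True
  then obtain l0 where l0: "l0 \<in> {1..n}" "y = (a(i:=l0), b(j:=l0))" by blast
  have "\<And>l. (y = (a(i:=l), b(j:=l))) = (l = l0)"
  proof
    fix l assume "y = (a(i:=l), b(j:=l))"
    then have "(a(i:=l)) i = (a(i:=l0)) i" using l0 by simp
    then show "l = l0" by simp
  qed (use l0 in simp)
  then have "(\<Sum>l\<in>{1..n}. if y = (a(i:=l), b(j:=l)) then (if a i = b j then 1 else 0) else 0)
     = (\<Sum>l\<in>{1..n}. if l = l0 then (if a i = b j then 1 else 0) else (0::complex))" by simp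
  also have "\<dots> = (if a i = b j then 1 else 0)" using l0 by simp
  finally show ?thesis using l0 by (auto simp: contr_def)
next
  case False
  then show ?thesis by (cases y) (auto simp: contr_def intro!: sum.neutral)
qed

lemma mult_col:
  assumes "finite L" "\<And>y. C y z = (\<Sum>l\<in>L. if y = g l then c l else 0)"
  shows "op_mult n k A C x z = (\<Sum>l\<in>L. if g l \<in> basisM n k then A x (g l) * c l else 0)"
proof -
  have "op_mult n k A C x z = (\<Sum>y\<in>basisM n k. \<Sum>l\<in>L. A x y * (if y = g l then c l else 0))"
    unfolding op_mult_def assms(2) by (simp add: sum_distrib_left)
  also have "\<dots> = (\<Sum>l\<in>L. \<Sum>y\<in>basisM n k. if y = g l then A x (g l) * c l else 0)"
    by (subst sum.swap) (auto intro!: sum.cong)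
  also have "\<dots> = (\<Sum>l\<in>L. if g l \<in> basisM n k then A x (g l) * c l else 0)"
    by (simp add: finite_basisM)
  finally show ?thesis .
qed

lemma mult_single:
  assumes "\<And>y. C y z = (if y = w then 1 else 0)"
  shows "op_mult n k A C x z = (if w \<in> basisM n k then A x w else 0)"
proof -
  have "op_mult n k A C x z = (\<Sum>y\<in>basisM n k. if y = w then A x w else 0)"
    unfolding op_mult_def assms by (auto intro!: sum.cong)
  then show ?thesis by (simp add: finite_basisM)
qed

lemma mult_contr:
  "op_mult n k A (contr n i j) x (a, b) = (\<Sum>l\<in>{1..n}. if (a(i:=l), b(j:=l)) \<in> basisM n k
      then A x (a(i:=l), b(j:=l)) * (if a i = b j then 1 else 0) else 0)"
  by (rule mult_col[where g="\<lambda>l. (a(i:=l), b(j:=l))" and c="\<lambda>l. if a i = b j then 1 else 0"])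
     (auto simp: contr_col)

lemma upd_mem:
  assumes "(a, b) \<in> basisM n k" "i \<in> {1..k}" "j \<in> {1..k}" "l \<in> {1..n}"
  shows "(a(i:=l), b(j:=l)) \<in> basisM n k"
  using assms unfolding basisM_def
  by (auto dest!: PiE_fun_upd[where x=i and y=l] PiE_fun_upd[where x=j and y=l] simp: insert_absorb)

lemma contr_comm:
  assumes "i \<in> {1..k}" "j \<in> {1..k}" "j0 \<in> {1..k}" "i \<noteq> j0" "j \<noteq> j0"
  shows "comm n k (contr n i j) (contr n j0 j0)"
  unfolding comm_def eqv_def
proof (intro ballI)
  fix x z assume x: "x \<in> basisM n k" and z: "z \<in> basisM n k"
  obtain a b where ab: "z = (a, b)" by (cases z)
  have "op_mult n k (contr n i j) (contr n j0 j0) x z =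
     (\<Sum>l\<in>{1..n}. contr n i j x (a(j0:=l), b(j0:=l)) * (if a j0 = b j0 then 1 else 0))"
    unfolding ab
    by (subst mult_contr) (use upd_mem z ab assms in \<open>auto intro!: sum.cong\<close>)
  also have "\<dots> = (\<Sum>l\<in>{1..n}. \<Sum>m\<in>{1..n}. if x = (a(j0:=l, i:=m), b(j0:=l, j:=m)) \<and> a i = b j \<and> a j0 = b j0 then 1 else 0)"
    by (subst contr_col) (use assms in \<open>auto simp: sum_distrib_right intro!: sum.cong\<close>)
  also have "\<dots> = (\<Sum>m\<in>{1..n}. \<Sum>l\<in>{1..n}. if x = (a(i:=m, j0:=l), b(j:=m, j0:=l)) \<and> a i = b j \<and> a j0 = b j0 then 1 else 0)"
    by (subst sum.swap) (use assms in \<open>auto simp: fun_upd_twist intro!: sum.cong\<close>)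
  also have "\<dots> = (\<Sum>m\<in>{1..n}. contr n j0 j0 x (a(i:=m), b(j:=m)) * (if a i = b j then 1 else 0))"
    by (subst contr_col) (use assms in \<open>auto simp: sum_distrib_right intro!: sum.cong\<close>)
  also have "\<dots> = op_mult n k (contr n j0 j0) (contr n i j) x z"
    unfolding ab
    by (subst mult_contr) (use upd_mem z ab assms in \<open>auto intro!: sum.cong\<close>)
  finally show "op_mult n k (contr n i j) (contr n j0 j0) x z = op_mult n k (contr n j0 j0) (contr n i j) x z" .
qed

lemma contr_sq:
  assumes "j \<in> {1..k}"
  shows "eqv n k (op_mult n k (contr n j j) (contr n j j)) (\<lambda>x z. of_nat n * contr n j j x z)"
  unfolding eqv_def
proof (intro ballI)
  fix x z assume x: "x \<in> basisM n k" and z: "z \<in> basisM n k"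
  obtain a b where ab: "z = (a, b)" by (cases z)
  have "op_mult n k (contr n j j) (contr n j j) x z =
     (\<Sum>l\<in>{1..n}. contr n j j x (a(j:=l), b(j:=l)) * (if a j = b j then 1 else 0))"
    unfolding ab
    by (subst mult_contr) (use upd_mem z ab assms in \<open>auto intro!: sum.cong\<close>)
  also have "\<dots> = (\<Sum>l\<in>{1..n}. contr n j j x (a, b))"
    by (intro sum.cong) (auto simp: contr_col)
  finally show "op_mult n k (contr n j j) (contr n j j) x z = of_nat n * contr n j j x z"
    using ab by simp
qed

lemma permutes_fix_inv: "\<sigma> permutes S \<Longrightarrow> \<sigma> j = j \<Longrightarrow> inv \<sigma> x = j \<longleftrightarrow> x = j"
  by (metis permutes_inverses(1) permutes_inverses(2))

lemma comp_mem:
  assumes "\<sigma> permutes {1..k}" "a \<in> {1..k} \<rightarrow>\<^sub>E {1..n}"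
  shows "a \<circ> inv \<sigma> \<in> {1..k} \<rightarrow>\<^sub>E {1..n}"
proof -
  have p: "inv \<sigma> permutes {1..k}" using assms(1) by (rule permutes_inv)
  show ?thesis using assms(2) permutes_in_image[OF p] permutes_not_in[OF p]
    by (auto simp: PiE_iff extensional_def)
qed

lemma permV_col: "permV \<sigma> y (a, b) = (if y = (a \<circ> inv \<sigma>, b) then 1 else 0)"
  by (cases y) (auto simp: permV_def)

lemma permVd_col: "permVd \<sigma> y (a, b) = (if y = (a, b \<circ> inv \<sigma>) then 1 else 0)"
  by (cases y) (auto simp: permVd_def)

lemma permV_comm:
  assumes "\<sigma> permutes {1..k}" "\<sigma> j0 = j0" "j0 \<in> {1..k}"
  shows "comm n k (permV \<sigma>) (contr n j0 j0)"
  unfolding comm_def eqv_def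
proof (intro ballI)
  fix x z assume x: "x \<in> basisM n k" and z: "z \<in> basisM n k"
  obtain a b where ab: "z = (a, b)" by (cases z)
  have ab': "a \<in> {1..k} \<rightarrow>\<^sub>E {1..n}" "b \<in> {1..k} \<rightarrow>\<^sub>E {1..n}" using z ab by (auto simp: basisM_def)
  have cm: "(a \<circ> inv \<sigma>, b) \<in> basisM n k" using comp_mem[OF assms(1) ab'(1)] ab'(2) by (simp add: basisM_def)
  have tw: "\<And>l. a(j0 := l) \<circ> inv \<sigma> = (a \<circ> inv \<sigma>)(j0 := l)"
    using permutes_fix_inv[OF assms(1,2)] by (auto simp: fun_eq_iff)
  have ij: "inv \<sigma> j0 = j0" using permutes_fix_inv[OF assms(1,2)] by simp
  have "op_mult n k (permV \<sigma>) (contr n j0 j0) x z =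
     (\<Sum>l\<in>{1..n}. permV \<sigma> x (a(j0:=l), b(j0:=l)) * (if a j0 = b j0 then 1 else 0))"
    unfolding ab
    by (subst mult_contr) (use upd_mem z ab assms in \<open>auto intro!: sum.cong\<close>)
  also have "\<dots> = contr n j0 j0 x (a \<circ> inv \<sigma>, b)"
    by (subst contr_col) (auto simp: permV_col tw ij intro!: sum.cong)
  also have "\<dots> = op_mult n k (contr n j0 j0) (permV \<sigma>) x z"
    unfolding ab by (subst mult_single[where w="(a \<circ> inv \<sigma>, b)" and C="permV \<sigma>" and z="(a,b)", OF permV_col]) (use cm in simp)
  finally show "op_mult n k (permV \<sigma>) (contr n j0 j0) x z = op_mult n k (contr n j0 j0) (permV \<sigma>) x z" .
qed

lemma permVd_comm:
  assumes "\<sigma> permutes {1..k}" "\<sigma> j0 = j0" "j0 \<in> {1..k}"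
  shows "comm n k (permVd \<sigma>) (contr n j0 j0)"
  unfolding comm_def eqv_def
proof (intro ballI)
  fix x z assume x: "x \<in> basisM n k" and z: "z \<in> basisM n k"
  obtain a b where ab: "z = (a, b)" by (cases z)
  have ab': "a \<in> {1..k} \<rightarrow>\<^sub>E {1..n}" "b \<in> {1..k} \<rightarrow>\<^sub>E {1..n}" using z ab by (auto simp: basisM_def)
  have cm: "(a, b \<circ> inv \<sigma>) \<in> basisM n k" using comp_mem[OF assms(1) ab'(2)] ab'(1) by (simp add: basisM_def)
  have tw: "\<And>l. b(j0 := l) \<circ> inv \<sigma> = (b \<circ> inv \<sigma>)(j0 := l)"
    using permutes_fix_inv[OF assms(1,2)] by (auto simp: fun_eq_iff)
  have ij: "inv \<sigma> j0 = j0" using permutes_fix_inv[OF assms(1,2)] by simp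
  have "op_mult n k (permVd \<sigma>) (contr n j0 j0) x z =
     (\<Sum>l\<in>{1..n}. permVd \<sigma> x (a(j0:=l), b(j0:=l)) * (if a j0 = b j0 then 1 else 0))"
    unfolding ab
    by (subst mult_contr) (use upd_mem z ab assms in \<open>auto intro!: sum.cong\<close>)
  also have "\<dots> = contr n j0 j0 x (a, b \<circ> inv \<sigma>)"
    by (subst contr_col) (auto simp: permVd_col tw ij intro!: sum.cong)
  also have "\<dots> = op_mult n k (contr n j0 j0) (permVd \<sigma>) x z"
    unfolding ab by (subst mult_single[where w="(a, b \<circ> inv \<sigma>)" and C="permVd \<sigma>" and z="(a,b)", OF permVd_col]) (use cm in simp)
  finally show "op_mult n k (permVd \<sigma>) (contr n j0 j0) x z = op_mult n k (contr n j0 j0) (permVd \<sigma>) x z" .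
qed

lemma comm_sum:
  assumes "\<forall>\<rho>\<in>G. comm n k (P \<rho>) C"
  shows "comm n k (\<lambda>x y. \<Sum>\<rho>\<in>G. f \<rho> * P \<rho> x y) C"
proof -
  have l: "op_mult n k (\<lambda>x y. \<Sum>\<rho>\<in>G. f \<rho> * P \<rho> x y) C x z = (\<Sum>\<rho>\<in>G. f \<rho> * op_mult n k (P \<rho>) C x z)" for x z
    unfolding op_mult_def by (simp add: sum_distrib_right sum_distrib_left mult.assoc) (rule sum.swap)
  have r: "op_mult n k C (\<lambda>x y. \<Sum>\<rho>\<in>G. f \<rho> * P \<rho> x y) x z = (\<Sum>\<rho>\<in>G. f \<rho> * op_mult n k C (P \<rho>) x z)" for x z
    unfolding op_mult_def by (simp add: sum_distrib_right sum_distrib_left mult.left_commute) (rule sum.swap)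
  show ?thesis using assms unfolding comm_def eqv_def l r by (auto intro!: sum.cong)
qed

abbreviation Fop :: "nat \<Rightarrow> nat \<Rightarrow> op" where
  "Fop n l \<equiv> (\<lambda>x y. op_id x y - proj n l x y)"

lemma mult_F_left:
  "op_mult n k (Fop n l) C x z = op_mult n k op_id C x z - op_mult n k (contr n l l) C x z / of_nat n"
  unfolding op_mult_def proj_def
  by (simp add: left_diff_distrib sum_subtractf sum_divide_distrib)

lemma mult_F_right:
  "op_mult n k C (Fop n l) x z = op_mult n k C op_id x z - op_mult n k C (contr n l l) x z / of_nat n"
  unfolding op_mult_def proj_def
  by (simp add: right_diff_distrib sum_subtractf sum_divide_distrib)

lemma comm_F: "comm n k (contr n l l) C \<Longrightarrow> comm n k (Fop n l) C"
  using comm_id[of n k C] unfolding comm_def eqv_def mult_F_left mult_F_right by simp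

lemma F_kill:
  assumes "n \<ge> 1" "j \<in> {1..k}"
  shows "eqv n k (op_mult n k (Fop n j) (contr n j j)) zop \<and> eqv n k (op_mult n k (contr n j j) (Fop n j)) zop"
  using id_left[of n k "contr n j j"] id_right[of n k "contr n j j"] contr_sq[OF assms(2), of n] assms(1)
  unfolding eqv_def mult_F_left mult_F_right zop_def by simp

lemma comm_young:
  assumes "\<forall>\<sigma>\<in>row_group k lam T. comm n k (P \<sigma>) C" "\<forall>\<sigma>\<in>col_group k lam T. comm n k (P \<sigma>) C"
  shows "comm n k (young_op n k P lam T) C"
proof -
  have 1: "comm n k (\<lambda>x y. \<Sum>\<rho>\<in>row_group k lam T. P \<rho> x y) C"
    using comm_sum[where f="\<lambda>_. 1", OF assms(1)] by simp
  show ?thesis unfolding young_op_def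
    by (rule comm_mult[OF 1 comm_sum[OF assms(2)]])
qed

lemma group_fix:
  assumes "standard_tableau lam ({1..k} - S) T" "j \<in> S" "j \<in> {1..k}"
    "\<sigma> \<in> row_group k lam T \<or> \<sigma> \<in> col_group k lam T"
  shows "\<sigma> permutes {1..k} \<and> \<sigma> j = j"
proof -
  have "T ` cells lam = {1..k} - S" using assms(1) unfolding standard_tableau_def
    by (simp add: bij_betw_def)
  then show ?thesis using assms(2-4) unfolding row_group_def col_group_def by auto
qed

theorem lemma1p13:
  fixes n k r :: nat and s t lam mu :: "nat list" and T Ts :: "nat \<times> nat \<Rightarrow> nat"
  assumes "n \<ge> 1" and "k \<ge> 1" and "r \<le> k"
    and "length s = k - r" and "sorted_wrt (<) s" and "set s \<subseteq> {1..k}"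
    and "length t = k - r" and "distinct t" and "set t \<subseteq> {1..k}"
    and "is_partition lam r" and "is_partition mu r"
    and "standard_tableau lam ({1..k} - set s) T"
    and "standard_tableau mu ({1..k} - set t) Ts"
    and "\<exists>i < k - r. s ! i = t ! i"
  shows "let y = op_prod n k [young_op n k permV lam T, young_op n k permVd mu Ts,
                              contr_seq n k s t]
         in \<forall>x\<in>basisM n k. \<forall>z\<in>basisM n k.
              op_mult n k (e_op n k) y x z = 0 \<and> op_mult n k y (e_op n k) x z = 0"
proof -
  obtain i where i: "i < k - r" "s ! i = t ! i" using assms(14) by blast
  define j where "j = s ! i"
  have js: "j \<in> set s" using i assms(4) unfolding j_def by (metis nth_mem)
  have jt: "j \<in> set t" using i assms(7) unfolding j_def by (metis nth_mem)
  have jk: "j \<in> {1..k}" using js assms(6) by auto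
  have ds: "distinct s" using assms(5) by (simp add: strict_sorted_iff)
  define C where "C = contr n j j"
  have cCC: "comm n k C C" by (simp add: comm_def eqv_refl)
  define Y1 where "Y1 = young_op n k permV lam T"
  define Y2 where "Y2 = young_op n k permVd mu Ts"
  define L where "L = map (\<lambda>(i,j). contr n i j) (zip s t)"
  have CL: "C \<in> set L" unfolding L_def C_def
  proof -
    have "(s ! i, t ! i) \<in> set (zip s t)" using i assms(4,7) unfolding set_zip by (metis (mono_tags, lifting) mem_Collect_eq min.idem)
    then show "contr n j j \<in> set (map (\<lambda>(i, j). contr n i j) (zip s t))"
      using i j_def by force
  qed
  have cL: "\<forall>G\<in>set L. comm n k G C"
  proof
    fix G assume "G \<in> set L"
    then obtain p where p: "p < k - r" "G = contr n (s ! p) (t ! p)"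
      unfolding L_def using assms(4,7) by (auto simp: set_zip)
    show "comm n k G C"
    proof (cases "p = i")
      case True then show ?thesis using p i cCC by (simp add: C_def j_def)
    next
      case False
      have eq1: "(s ! p = s ! i) = (p = i)" by (rule nth_eq_iff_index_eq[OF ds]) (use p(1) i(1) assms(4) in auto)
      have eq2: "(t ! p = t ! i) = (p = i)" by (rule nth_eq_iff_index_eq[OF assms(8)]) (use p(1) i(1) assms(7) in auto)
      have "s ! p \<noteq> j" unfolding j_def using eq1 False by blast
      moreover have "t ! p \<noteq> j" unfolding j_def using eq2 False i(2) by metis
      moreover have "s ! p \<in> set s" "t ! p \<in> set t" using p(1) assms(4,7) by simp_all
      then have "s ! p \<in> {1..k}" "t ! p \<in> {1..k}" using assms(6,9) by blast+
      ultimately show ?thesis unfolding p(2) C_def using jk by (intro contr_comm) auto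
    qed
  qed
  have cY1: "comm n k Y1 C" unfolding Y1_def C_def
    using group_fix[OF assms(12) js jk] jk by (auto intro!: comm_young permV_comm)
  have cY2: "comm n k Y2 C" unfolding Y2_def C_def
    using group_fix[OF assms(13) jt jk] jk by (auto intro!: comm_young permVd_comm)
  define Lf where "Lf = Y1 # Y2 # L"
  have cLf: "\<forall>G\<in>set Lf. comm n k G C" using cL cY1 cY2 by (simp add: Lf_def)
  have CLf: "C \<in> set Lf" using CL by (simp add: Lf_def)
  define R where "R = op_prod n k (remove1 C Lf)"
  have y1: "eqv n k (op_prod n k [Y1, Y2, contr_seq n k s t]) (op_prod n k Lf)"
    unfolding Lf_def op_prod_def contr_seq_def L_def
    by (simp add: op_prod_def[symmetric] mult_cong eqv_refl id_right)
  have yCR: "eqv n k (op_prod n k [Y1, Y2, contr_seq n k s t]) (op_mult n k C R)"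
    using eqv_trans[OF y1 prod_extract[OF cLf CLf]] by (simp add: R_def)
  have cR: "comm n k R C" unfolding R_def using cLf
    by (intro comm_prod) (meson in_mono set_remove1_subset)
  have yRC: "eqv n k (op_prod n k [Y1, Y2, contr_seq n k s t]) (op_mult n k R C)"
    using eqv_trans[OF yCR eqv_sym[OF cR[unfolded comm_def]]] .
  define El where "El = map (\<lambda>i. (\<lambda>x y. op_id x y - proj n i x y)) [1..<k+1]"
  have eEl: "e_op n k = op_prod n k El" by (simp add: e_op_def El_def)
  have cEl: "\<forall>G\<in>set El. comm n k G C"
  proof
    fix G assume "G \<in> set El"
    then obtain l where l0: "l \<in> set [1..<k+1]" "G = Fop n l" unfolding El_def set_map by blast
    then have l: "l \<in> {1..k}" "G = Fop n l" by auto
    show "comm n k G C"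
    proof (cases "l = j")
      case True then show ?thesis using l cCC comm_F by (simp add: C_def)
    next
      case False then show ?thesis using l jk comm_F contr_comm by (simp add: C_def)
    qed
  qed
  have "j \<in> set [1..<k+1]" using jk by auto
  then have FEl: "Fop n j \<in> set El" unfolding El_def set_map by (rule imageI)
  have ek: "eqv n k (op_mult n k (e_op n k) C) zop \<and> eqv n k (op_mult n k C (e_op n k)) zop"
    unfolding eEl using prod_kill[OF cEl FEl] F_kill[OF assms(1) jk] by (simp add: C_def)
  have 1: "eqv n k (op_mult n k (e_op n k) (op_prod n k [Y1, Y2, contr_seq n k s t])) zop"
  proof -
    have "eqv n k (op_mult n k (e_op n k) (op_prod n k [Y1, Y2, contr_seq n k s t]))
        (op_mult n k (op_mult n k (e_op n k) C) R)"
      unfolding mult_assoc by (rule mult_cong[OF eqv_refl yCR])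
    moreover have "eqv n k (op_mult n k (op_mult n k (e_op n k) C) R) zop"
      using mult_cong[OF conjunct1[OF ek] eqv_refl[of n k R]] by (simp add: zero_left)
    ultimately show ?thesis by (rule eqv_trans)
  qed
  have 2: "eqv n k (op_mult n k (op_prod n k [Y1, Y2, contr_seq n k s t]) (e_op n k)) zop"
  proof -
    have "eqv n k (op_mult n k (op_prod n k [Y1, Y2, contr_seq n k s t]) (e_op n k))
        (op_mult n k R (op_mult n k C (e_op n k)))"
      unfolding mult_assoc[symmetric] by (rule mult_cong[OF yRC eqv_refl])
    moreover have "eqv n k (op_mult n k R (op_mult n k C (e_op n k))) zop"
      using mult_cong[OF eqv_refl[of n k R] conjunct2[OF ek]] by (simp add: zero_right)
    ultimately show ?thesis by (rule eqv_trans)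
  qed
  show ?thesis using 1 2 unfolding Let_def Y1_def Y2_def eqv_def zop_def by simp
qed

end
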